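(* Let $0<\mu<L$, $q=\mu/L$, and define $A_0=0$, $A_{k+1}=\frac{(1+q)A_k+2\big(1+\sqrt{(1+A_k)(1+qA_k)}\big)}{(1-q)^2}$, $\beta_k=\frac{A_k}{(1-q)A_{k+1}}$, $\delta_k=\sqrt{\frac{A_{k+1}}{1+qA_{k+1}}}$ and $\sigma_k=\sqrt{(1+A_k)(1+qA_k)}$. Then, as $k\to\infty$: $A_k\to\infty$; $A_k/A_{k+1}\to(1-\sqrt q)^2$; $\beta_k\to\frac{1-\sqrt q}{1+\sqrt q}$; $\delta_k\to\frac1{\sqrt q}$; $\sigma_k/A_k\to\sqrt q$; and $\sigma_k/A_{k+1}\to\sqrt q(1-\sqrt q)^2$. *)

theory Defs
  imports "HOL-Analysis.Analysis"
begin

fun seqA :: "real \<Rightarrow> nat \<Rightarrow> real" where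
  "seqA q 0 = 0"
| "seqA q (Suc k) =
     ((1 + q) * seqA q k + 2 * (1 + sqrt ((1 + seqA q k) * (1 + q * seqA q k)))) / (1 - q)^2"

definition betaS :: "real \<Rightarrow> nat \<Rightarrow> real" where
  "betaS q k = seqA q k / ((1 - q) * seqA q (Suc k))"

definition deltaS :: "real \<Rightarrow> nat \<Rightarrow> real" where
  "deltaS q k = sqrt (seqA q (Suc k) / (1 + q * seqA q (Suc k)))"

definition sigmaS :: "real \<Rightarrow> nat \<Rightarrow> real" where
  "sigmaS q k = sqrt ((1 + seqA q k) * (1 + q * seqA q k))"

end

theory Submission
  imports Defs
begin

lemma aux_req:
  fixes a s q d :: real
  assumes "a > 0"
  shows "((1+q)*a + 2*(1+s))/d / a = ((1 + q) + 2 * inverse a + 2 * (s / a)) / d"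
  using assms by (simp add: field_simps)

lemma aux_del:
  fixes a q :: real
  assumes "a > 0"
  shows "a / (1 + q * a) = inverse (inverse a + q)"
  using assms by (simp add: field_simps)

lemma aux_canc:
  fixes a s b :: real
  assumes "a > 0"
  shows "s / a * (a / b) = s / b"
  using assms by simp

theorem lemma4:
  fixes \<mu> L q :: real
  assumes "0 < \<mu>" and "\<mu> < L" and "q = \<mu> / L"
  shows "filterlim (seqA q) at_top sequentially \<and>
     (\<lambda>k. seqA q k / seqA q (Suc k)) \<longlonglongrightarrow> (1 - sqrt q)^2 \<and>
     betaS q \<longlonglongrightarrow> (1 - sqrt q) / (1 + sqrt q) \<and>
     deltaS q \<longlonglongrightarrow> 1 / sqrt q \<and>
     (\<lambda>k. sigmaS q k / seqA q k) \<longlonglongrightarrow> sqrt q \<and>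
     (\<lambda>k. sigmaS q k / seqA q (Suc k)) \<longlonglongrightarrow> sqrt q * (1 - sqrt q)^2"
proof -
  define A where "A = seqA q"
  have L0: "0 < L" using assms by simp
  have q0: "0 < q" using assms L0 by simp
  have q1: "q < 1" using assms L0 by (simp add: divide_less_eq)
  define sq where "sq = sqrt q"
  have sq0: "0 < sq" and sq1: "sq < 1" and sqq: "sq * sq = q"
    using q0 q1 by (auto simp: sq_def)
  have Apos: "A k \<ge> 0" for k
  proof (induction k)
    case 0 then show ?case by (simp add: A_def)
  next
    case (Suc k)
    then show ?case using q0 q1 unfolding A_def
      by (simp add: divide_nonneg_pos)
  qed
  have Astep: "A (Suc k) \<ge> A k + 2" for k
  proof -
    have d: "0 < (1 - q)^2" "(1-q)^2 \<le> 1" using q0 q1 by (auto simp: power2_eq_square mult_le_one)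
    have "(1 + q) * A k + 2 * (1 + sqrt ((1 + A k) * (1 + q * A k))) \<ge> A k + 2"
    proof -
      have "q * A k \<ge> 0" using Apos[of k] q0 by simp
      moreover have "sqrt ((1 + A k) * (1 + q * A k)) \<ge> 0"
        using Apos[of k] \<open>q * A k \<ge> 0\<close> by simp
      ultimately show ?thesis by (simp add: algebra_simps)
    qed
    also have "A k + 2 \<ge> (A k + 2) * (1-q)^2" using d Apos[of k]
      by (simp add: mult_left_le)
    finally have "(A k + 2) \<le> ((1 + q) * A k + 2 * (1 + sqrt ((1 + A k) * (1 + q * A k)))) / (1-q)^2"
      using d by (simp add: pos_le_divide_eq)
    then show ?thesis by (simp add: A_def)
  qed
  have Alow: "A k \<ge> 2 * real k" for k
  proof (induction k)
    case 0 then show ?case using Apos by simp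
  next
    case (Suc k) then show ?case using Astep[of k] by simp
  qed
  have Apos1: "A k > 0" if "k \<ge> 1" for k using Alow[of k] that by simp
  have lim1: "filterlim A at_top sequentially"
  proof (rule filterlim_at_top_mono[OF filterlim_real_sequentially])
    show "\<forall>\<^sub>F x in sequentially. real x \<le> A x" using Alow Apos
      by (intro always_eventually allI) (smt (verit) of_nat_0_le_iff)
  qed
  define x where "x k = inverse (A k)" for k
  have x0: "x \<longlonglongrightarrow> 0" unfolding x_def by (rule tendsto_inverse_0_at_top[OF lim1])
  have ev1: "\<forall>\<^sub>F k in sequentially. k \<ge> (1::nat)" by (rule eventually_ge_at_top)
  have sigeq: "sigmaS q k / A k = sqrt ((1 + x k) * (q + x k))" if "k \<ge> 1" for k
  proof -
    have a: "A k > 0" using Apos1 that .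
    have "sigmaS q k / A k = sqrt ((1 + A k) * (1 + q * A k) / (A k)^2)"
      using a by (simp add: sigmaS_def A_def real_sqrt_divide)
    also have "(1 + A k) * (1 + q * A k) / (A k)^2 = (1 + x k) * (q + x k)"
      using a by (simp add: x_def field_simps power2_eq_square)
    finally show ?thesis .
  qed
  have lim_s: "(\<lambda>k. sigmaS q k / A k) \<longlonglongrightarrow> sq"
  proof -
    have "(\<lambda>k. sqrt ((1 + x k) * (q + x k))) \<longlonglongrightarrow> sqrt ((1 + 0) * (q + 0))"
      by (intro tendsto_intros x0)
    then have "(\<lambda>k. sqrt ((1 + x k) * (q + x k))) \<longlonglongrightarrow> sq" by (simp add: sq_def)
    then show ?thesis
      by (rule Lim_transform_eventually) (rule eventually_mono[OF ev1], simp add: sigeq)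
  qed
  have req: "A (Suc k) / A k = ((1 + q) + 2 * x k + 2 * (sigmaS q k / A k)) / (1 - q)^2"
    if "k \<ge> 1" for k
  proof -
    have a: "A k > 0" using Apos1 that .
    have e: "A (Suc k) = ((1+q)*A k + 2*(1 + sigmaS q k))/(1-q)^2"
      by (simp add: A_def sigmaS_def)
    show ?thesis unfolding e x_def by (rule aux_req[OF a])
  qed
  have lim_r: "(\<lambda>k. A (Suc k) / A k) \<longlonglongrightarrow> ((1 + q) + 2 * 0 + 2 * sq) / (1 - q)^2"
  proof -
    have "(\<lambda>k. ((1 + q) + 2 * x k + 2 * (sigmaS q k / A k)) / (1 - q)^2)
        \<longlonglongrightarrow> ((1 + q) + 2 * 0 + 2 * sq) / (1 - q)^2"
      using q1 by (intro tendsto_intros x0 lim_s) simp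
    then show ?thesis
      by (rule Lim_transform_eventually) (rule eventually_mono[OF ev1], simp add: req)
  qed
  have idq: "((1 + q) + 2 * 0 + 2 * sq) / (1 - q)^2 = inverse ((1 - sq)^2)"
  proof -
    have "(1 - q)^2 = (1 - sq)^2 * (1 + sq)^2" using sqq by (simp add: power2_eq_square algebra_simps)
    moreover have "(1 + q) + 2 * 0 + 2 * sq = (1 + sq)^2" using sqq by (simp add: power2_eq_square algebra_simps)
    ultimately show ?thesis using sq0 sq1 by (simp add: field_simps)
  qed
  have lim_ratio: "(\<lambda>k. A k / A (Suc k)) \<longlonglongrightarrow> (1 - sq)^2"
  proof -
    have "(\<lambda>k. inverse (A (Suc k) / A k)) \<longlonglongrightarrow> inverse (inverse ((1 - sq)^2))"
      using lim_r idq sq1 by (intro tendsto_inverse) auto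
    then show ?thesis by (simp add: inverse_eq_divide)
  qed
  have lim_beta: "betaS q \<longlonglongrightarrow> (1 - sq) / (1 + sq)"
  proof -
    have "(\<lambda>k. (A k / A (Suc k)) / (1 - q)) \<longlonglongrightarrow> (1 - sq)^2 / (1 - q)"
      using lim_ratio q1 by (intro tendsto_intros) auto
    moreover have "(1 - sq)^2 / (1 - q) = (1 - sq) / (1 + sq)"
    proof -
      have "1 - q = (1 - sq) * (1 + sq)" using sqq by (simp add: algebra_simps)
      moreover have "1 - sq \<noteq> 0" using sq1 by simp
      ultimately show ?thesis by (simp add: power2_eq_square)
    qed
    moreover have "betaS q = (\<lambda>k. (A k / A (Suc k)) / (1 - q))"
      by (auto simp: betaS_def A_def)
    ultimately show ?thesis by simp
  qed
  have lim_delta: "deltaS q \<longlonglongrightarrow> 1 / sq"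
  proof -
    have xs: "(\<lambda>k. x (Suc k)) \<longlonglongrightarrow> 0" using x0 by (rule LIMSEQ_Suc)
    have "(\<lambda>k. sqrt (inverse (x (Suc k) + q))) \<longlonglongrightarrow> sqrt (inverse (0 + q))"
      using q0 by (intro tendsto_intros xs) auto
    moreover have "sqrt (inverse (0 + q)) = 1 / sq" by (simp add: sq_def real_sqrt_inverse divide_inverse)
    moreover have "deltaS q = (\<lambda>k. sqrt (inverse (x (Suc k) + q)))"
    proof (rule ext)
      fix k
      have a: "A (Suc k) > 0" using Apos1[of "Suc k"] by simp
      then show "deltaS q k = sqrt (inverse (x (Suc k) + q))" unfolding deltaS_def x_def A_def[symmetric]
        by (simp only: aux_del)
    qed
    ultimately show ?thesis by simp
  qed
  have lim_s2: "(\<lambda>k. sigmaS q k / A (Suc k)) \<longlonglongrightarrow> sq * (1 - sq)^2"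
  proof -
    have "(\<lambda>k. (sigmaS q k / A k) * (A k / A (Suc k))) \<longlonglongrightarrow> sq * (1 - sq)^2"
      by (intro tendsto_intros lim_s lim_ratio)
    then show ?thesis
      by (rule Lim_transform_eventually) (rule eventually_mono[OF ev1], rule aux_canc, rule Apos1, assumption)
  qed
  show ?thesis using lim1 lim_ratio lim_beta lim_delta lim_s lim_s2
    unfolding A_def sq_def by auto
qed

end
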